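(* Consider problem (P) under Assumptions (A1)–(A3), suppose $\inf_{x\in\mathcal{X}}f(x)>-\infty$, and suppose the SMIL algorithm generates an infinite sequence of (accepted) iterates. Then: (i) $\{f(x^k)\}$ and $\{m_k\}$ converge to the same finite value $f_\star\ge\inf_{\mathcal{X}}f$, the latter from above; (ii) $\sum_{k\in\mathbb{N}}\Psi_k<\infty$; (iii) $\lim_{k\to\infty}\Psi_k=0$.
   Context: Problem (P): minimize $f(x)$ subject to $x\in\mathcal{X}:=\bar{\mathcal{X}}\cap\{x\in\mathbb{R}^n : x_i\in\mathbb{Z}\ \forall i\in\mathcal{I}\}$, with $\bar{\mathcal{X}}\subseteq\mathbb{R}^n$ a closed convex polyhedral set, $\mathcal{I}\subseteq\{1,\dots,n\}$, $\mathcal{X}\ne\emptyset$, $f:\mathbb{R}^n\to\mathbb{R}$. Write $x=(u,z)$ with $u$ the components with indices not in $\mathcal{I}$ and $z$ those in $\mathcal{I}$. Assumptions: (A1) $f$ is $C^1$ with locally Lipschitz gradient; (A2) $f(u,z)=f_1(u)+\langle f_2,z\rangle$; (A3) the feasible integer parts $\{z:(u,z)\in\mathcal{X}\}$ form a bounded set. $\|x\|_{PL}$ is the $\ell_1$- or $\ell_\infty$-norm of the components with indices not in $\mathcal{I}$; $\mathbb{B}_{PL}(x,\Delta):=\{w:\|w-x\|_{PL}\le\Delta\}$. SMIL algorithm. Input $x^0\in\mathcal{X}$, $\varepsilon\ge0$; parameters $\Delta_0>0$, $\varrho,\kappa\in(0,1)$, $\kappa_m\in(0,1]$. Set $m_0:=f(x^0)$.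 For $k=0,1,2,\dots$: (S1) compute $x^{k+1}\in\arg\min\{\langle\nabla f(x^k),x\rangle : x\in\mathcal{X}\cap\mathbb{B}_{PL}(x^k,\Delta_k)\}$; (S2) set $a_k:=m_k-f(x^{k+1})$ and $\Psi_k:=\langle\nabla f(x^k),x^k-x^{k+1}\rangle$; (S3) if $\Psi_k\le\varepsilon$, return $x^k$; (S4) if $a_k<\varrho\Psi_k$, set $\Delta_k\leftarrow\kappa\Delta_k$ and go back to (S1); (S5) set $m_{k+1}:=(1-\kappa_m)m_k+\kappa_m f(x^{k+1})$; (S6) choose $\Delta_{k+1}$ either by the rule $\Delta_{k+1}=\kappa\Delta_k$ if $\rho_k<\varrho_1$, $=\Delta_k$ if $\varrho_1\le\rho_k<\varrho_2$, $=\Delta_k/\kappa$ if $\rho_k\ge\varrho_2$, where $\rho_k:=a_k/\Psi_k$ and $\varrho\le\varrho_1<\varrho_2<1$; or by a reset $\Delta_{k+1}\in[\Delta_{\min},\Delta_{\max}]$, $0<\Delta_{\min}\le\Delta_{\max}$. Here $\Psi_k$, $m_k$, $x^{k+1}$ refer to the accepted values at iteration $k$. *)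

theory Defs
  imports "HOL-Analysis.Analysis"
begin

definition mi_feasible :: "(real^'n) set \<Rightarrow> 'n set \<Rightarrow> (real^'n) set" where
  "mi_feasible Xbar I = Xbar \<inter> {x. \<forall>i\<in>I. x $ i \<in> \<int>}"

definition cont_part :: "'n set \<Rightarrow> real^'n \<Rightarrow> real^'n" where
  "cont_part I x = (\<chi> i. if i \<in> I then 0 else x $ i)"

definition int_part :: "'n set \<Rightarrow> real^'n \<Rightarrow> real^'n" where
  "int_part I x = (\<chi> i. if i \<in> I then x $ i else 0)"

definition pl_norm1 :: "'n::finite set \<Rightarrow> real^'n \<Rightarrow> real" where
  "pl_norm1 I x = (\<Sum>i\<in>UNIV - I. \<bar>x $ i\<bar>)"

definition pl_norminf :: "'n::finite set \<Rightarrow> real^'n \<Rightarrow> real" where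
  "pl_norminf I x = Max (insert 0 ((\<lambda>i. \<bar>x $ i\<bar>) ` (UNIV - I)))"

definition pl_ball :: "(real^'n \<Rightarrow> real) \<Rightarrow> real^'n \<Rightarrow> real \<Rightarrow> (real^'n) set" where
  "pl_ball nrm x \<Delta> = {w. nrm (w - x) \<le> \<Delta>}"

definition smil_step :: "(real^'n) set \<Rightarrow> (real^'n \<Rightarrow> real) \<Rightarrow> real^'n \<Rightarrow> real^'n \<Rightarrow> real \<Rightarrow> real^'n \<Rightarrow> bool" where
  "smil_step X nrm g x \<Delta> y \<longleftrightarrow>
     y \<in> X \<inter> pl_ball nrm x \<Delta> \<and> (\<forall>w \<in> X \<inter> pl_ball nrm x \<Delta>. g \<bullet> y \<le> g \<bullet> w)"

end

theory Submission
  imports Defs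
begin

theorem mainTheorem6:
  fixes f :: "real^'n \<Rightarrow> real" and f' :: "real^'n \<Rightarrow> real^'n"
    and Xbar :: "(real^'n) set" and I :: "'n set"
    and nrm :: "real^'n \<Rightarrow> real"
    and x :: "nat \<Rightarrow> real^'n" and m :: "nat \<Rightarrow> real"
    and D :: "nat \<Rightarrow> real" and Dacc :: "nat \<Rightarrow> real" and j :: "nat \<Rightarrow> nat"
    and eps Delta0 rho kappa kappam rho1 rho2 Dmin Dmax :: real
  defines "X \<equiv> mi_feasible Xbar I"
  defines "Psi \<equiv> (\<lambda>k. f' (x k) \<bullet> (x k - x (Suc k)))"
  assumes poly: "polyhedron Xbar"
    and nonempty: "X \<noteq> {}"
    \<comment> \<open>(A1): f is C^1 with gradient f', and f' is locally Lipschitz\<close>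
    and A1_grad: "\<And>y. (f has_derivative (\<lambda>h. f' y \<bullet> h)) (at y)"
    and A1_lip: "\<And>y. \<exists>e>0. \<exists>L. \<forall>v\<in>ball y e. \<forall>w\<in>ball y e. norm (f' v - f' w) \<le> L * norm (v - w)"
    \<comment> \<open>(A2): f(u,z) = f_1(u) + <f_2, z>\<close>
    and A2: "\<exists>f1 :: real^'n \<Rightarrow> real. \<exists>f2 :: real^'n. \<forall>y. f y = f1 (cont_part I y) + f2 \<bullet> int_part I y"
    \<comment> \<open>(A3): the feasible integer parts form a bounded set\<close>
    and A3: "bounded (int_part I ` X)"
    \<comment> \<open>the PL-norm is the l1- or the l-infinity-norm of the continuous components\<close>
    and nrm: "nrm = pl_norm1 I \<or> nrm = pl_norminf I"
    and inf_finite: "bdd_below (f ` X)"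
    \<comment> \<open>parameters\<close>
    and eps_nn: "eps \<ge> 0" and D0pos: "Delta0 > 0"
    and rho_bd: "0 < rho" "rho < 1" and kappa_bd: "0 < kappa" "kappa < 1"
    and kappam_bd: "0 < kappam" "kappam \<le> 1"
    and rho12: "rho \<le> rho1" "rho1 < rho2" "rho2 < 1"
    and Dminmax: "0 < Dmin" "Dmin \<le> Dmax"
    \<comment> \<open>initialization\<close>
    and x0: "x 0 \<in> X" and m0: "m 0 = f (x 0)" and D0: "D 0 = Delta0"
    \<comment> \<open>inner loop (S1)-(S4): j k rejected trial radii, then the accepted radius Dacc k\<close>
    and rejected: "\<And>k i. i < j k \<Longrightarrow> \<exists>y. smil_step X nrm (f' (x k)) (x k) (kappa ^ i * D k) y
                      \<and> f' (x k) \<bullet> (x k - y) > eps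
                      \<and> m k - f y < rho * (f' (x k) \<bullet> (x k - y))"
    and accepted_radius: "\<And>k. Dacc k = kappa ^ j k * D k"
    and step: "\<And>k. smil_step X nrm (f' (x k)) (x k) (Dacc k) (x (Suc k))"
    and no_stop: "\<And>k. Psi k > eps"
    and accept: "\<And>k. m k - f (x (Suc k)) \<ge> rho * Psi k"
    \<comment> \<open>(S5)\<close>
    and m_upd: "\<And>k. m (Suc k) = (1 - kappam) * m k + kappam * f (x (Suc k))"
    \<comment> \<open>(S6): radius update rule or reset\<close>
    and D_upd: "\<And>k. (let ratio = (m k - f (x (Suc k))) / Psi k in
                   D (Suc k) = (if ratio < rho1 then kappa * Dacc k
                                else if ratio < rho2 then Dacc k else Dacc k / kappa))
                 \<or> D (Suc k) \<in> {Dmin..Dmax}"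
  shows "(\<exists>fstar. (\<lambda>k. f (x k)) \<longlonglongrightarrow> fstar \<and> m \<longlonglongrightarrow> fstar
            \<and> fstar \<ge> Inf (f ` X) \<and> (\<forall>k. m k \<ge> fstar))
         \<and> summable Psi \<and> Psi \<longlonglongrightarrow> 0"
proof -
  have xX: "x k \<in> X" for k
  proof (cases k)
    case 0 then show ?thesis using x0 by simp
  next
    case (Suc n) then show ?thesis using step[of n] unfolding smil_step_def by auto
  qed
  define L where "L = Inf (f ` X)"
  have fL: "f (x k) \<ge> L" for k
    unfolding L_def using xX[of k] inf_finite by (simp add: cInf_lower)
  have Psi_nn: "Psi k \<ge> 0" for k using no_stop[of k] eps_nn by linarith
  have dec: "m (Suc k) \<le> m k - kappam * rho * Psi k" for k
  proof -
    have "kappam * (rho * Psi k) \<le> kappam * (m k - f (x (Suc k)))"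
      using accept[of k] kappam_bd by (intro mult_left_mono) auto
    then show ?thesis using m_upd[of k] by (simp add: algebra_simps)
  qed
  have pos: "0 \<le> kappam * rho * Psi k" for k using kappam_bd rho_bd Psi_nn[of k] by simp
  have mdec: "decseq m" proof (rule decseq_SucI)
    fix k show "m (Suc k) \<le> m k" using dec[of k] pos[of k] by linarith
  qed
  have mL: "m k \<ge> L" for k
  proof (induction k)
    case 0 then show ?case using m0 fL[of 0] by simp
  next
    case (Suc k)
    have "(1 - kappam) * L \<le> (1 - kappam) * m k" using Suc kappam_bd by (intro mult_left_mono) auto
    moreover have "kappam * L \<le> kappam * f (x (Suc k))" using fL kappam_bd by (intro mult_left_mono) auto
    ultimately show ?case using m_upd[of k] by (simp add: algebra_simps)
  qed
  obtain fs where mlim: "m \<longlonglongrightarrow> fs" and mge: "\<forall>i. fs \<le> m i"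
    using decseq_convergent[OF mdec, of L] mL by blast
  have fsL: "fs \<ge> L" by (rule LIMSEQ_le_const[OF mlim]) (use mL in auto)
  have kr: "kappam * rho > 0" using kappam_bd rho_bd by simp
  have sg: "summable (\<lambda>n. (m n - m (Suc n)) / (kappam * rho))"
    by (intro summable_divide telescope_summable'[OF mlim])
  have sP: "summable Psi"
  proof (rule summable_comparison_test[OF _ sg])
    show "\<exists>N. \<forall>n\<ge>N. norm (Psi n) \<le> (m n - m (Suc n)) / (kappam * rho)"
    proof (intro exI allI impI)
      fix n
      have "kappam * rho * Psi n \<le> m n - m (Suc n)" using dec[of n] by simp
      then have "Psi n \<le> (m n - m (Suc n)) / (kappam * rho)" using kr
        by (simp add: pos_le_divide_eq mult.commute)
      then show "norm (Psi n) \<le> (m n - m (Suc n)) / (kappam * rho)" using Psi_nn[of n] by simp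
    qed
  qed
  have fS: "(\<lambda>k. f (x (Suc k))) \<longlonglongrightarrow> fs"
  proof -
    have eq: "f (x (Suc k)) = (m (Suc k) - (1 - kappam) * m k) / kappam" for k
      using m_upd[of k] kappam_bd by (simp add: field_simps)
    have "(\<lambda>k. (m (Suc k) - (1 - kappam) * m k) / kappam) \<longlonglongrightarrow> (fs - (1 - kappam) * fs) / kappam"
      by (intro tendsto_intros LIMSEQ_Suc[OF mlim] mlim) (use kappam_bd in auto)
    moreover have "(fs - (1 - kappam) * fs) / kappam = fs" using kappam_bd by (simp add: field_simps)
    ultimately show ?thesis by (simp add: eq)
  qed
  then have "(\<lambda>k. f (x k)) \<longlonglongrightarrow> fs" using filterlim_sequentially_Suc by blast
  then show ?thesis using mlim fsL mge sP summable_LIMSEQ_zero[OF sP] unfolding L_def by blast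
qed

end
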